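(* Let $\Psi : H^*(SU(3)/T_{SU(3)};\mathbb{C})\to H^*(SU(3)/T_{SU(3)};\mathbb{C})$ be a ring homomorphism. Then there exist $\omega_1,\omega_2\in W$ such that $\omega_1\circ \Psi\circ \omega_2$ is represented by either $\lambda\cdot \left(\begin{smallmatrix} 1 & 0\\ 0 & 1\end{smallmatrix}\right)$ with $\lambda\in\mathbb{C}^*$, or by $\lambda\cdot \left(\begin{smallmatrix} 1 & \varsigma\\ 0 & 0\end{smallmatrix}\right)$ with $\lambda\in\mathbb{C}$, where $\varsigma$ satisfies $\varsigma^2+\varsigma+1=0$.
   Context: $T_{SU(3)}$ denotes the standard maximal torus of $SU(3)$ (unitary diagonal matrices of determinant one), and $SU(3)/T_{SU(3)}$ is the six-dimensional complex flag manifold. Its complex cohomology is identified with $\mathbb{C}[x_1,x_2]/(x_1^2+x_2^2+x_1 x_2,\; x_1^2 x_2+x_1 x_2^2)$, where $x_1,x_2,x_3$ are the standard generators of $H^*(BT_{U(3)};\mathbb{Z})=\mathbb{Z}[x_1,x_2,x_3]$ (so $x_1^3=x_2^3=x_1^2x_2^2=0$ in this ring). Any ring endomorphism of $H^*(SU(3)/T_{SU(3)};\mathbb{C})$ is determined by its restriction to $H^2(SU(3)/T_{SU(3)};\mathbb{C})$, and "represented by a matrix" refers to the matrix $\left(\begin{smallmatrix} a_{11} & a_{12}\\ a_{21} & a_{22}\end{smallmatrix}\right)$ of this restriction with respect to the basis $(x_1,x_2)$. $W\cong S_3$ is the Weyl group of $U(3)$ (equivalently $N(T_{SU(3)})/T_{SU(3)}$),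 acting on the cohomology of $SU(3)/T_{SU(3)}$ via permutation of $x_1,x_2,x_3$; the permutations $(1),(12),(13),(23),(123),(321)$ act on $H^2$ by the matrices $\left(\begin{smallmatrix} 1&0\\0&1\end{smallmatrix}\right)$, $\left(\begin{smallmatrix} 0&1\\1&0\end{smallmatrix}\right)$, $\left(\begin{smallmatrix} -1&0\\-1&1\end{smallmatrix}\right)$, $\left(\begin{smallmatrix} 1&-1\\0&-1\end{smallmatrix}\right)$, $\left(\begin{smallmatrix} 0&-1\\1&-1\end{smallmatrix}\right)$, $\left(\begin{smallmatrix} -1&1\\-1&0\end{smallmatrix}\right)$ respectively. $W$ acts on ring endomorphisms by pre- and post-composition. *)

theory Defs
  imports "HOL-Analysis.Analysis"
begin

text \<open>The complex cohomology ring H = C[x1,x2]/(x1^2+x2^2+x1 x2, x1^2 x2 + x1 x2^2)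
  of SU(3)/T, as a 6-dimensional commutative C-algebra.  An element
  Coh c0 c1 c2 c3 c4 c5 stands for
  c0 + c1 x1 + c2 x2 + c3 x1^2 + c4 x1 x2 + c5 x1^2 x2
  (a basis of the quotient; the relations give x2^2 = - x1^2 - x1 x2,
  x1^3 = x2^3 = 0, x1 x2^2 = - x1^2 x2, x1^2 x2^2 = 0).\<close>

datatype coh = Coh complex complex complex complex complex complex

fun coh_add :: "coh \<Rightarrow> coh \<Rightarrow> coh" where
  "coh_add (Coh a0 a1 a2 a3 a4 a5) (Coh b0 b1 b2 b3 b4 b5) =
     Coh (a0 + b0) (a1 + b1) (a2 + b2) (a3 + b3) (a4 + b4) (a5 + b5)"

fun coh_scale :: "complex \<Rightarrow> coh \<Rightarrow> coh" where
  "coh_scale c (Coh a0 a1 a2 a3 a4 a5) =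
     Coh (c * a0) (c * a1) (c * a2) (c * a3) (c * a4) (c * a5)"

fun coh_mult :: "coh \<Rightarrow> coh \<Rightarrow> coh" where
  "coh_mult (Coh a0 a1 a2 a3 a4 a5) (Coh b0 b1 b2 b3 b4 b5) =
     Coh (a0 * b0)
         (a0 * b1 + a1 * b0)
         (a0 * b2 + a2 * b0)
         (a0 * b3 + a3 * b0 + a1 * b1 - a2 * b2)
         (a0 * b4 + a4 * b0 + a1 * b2 + a2 * b1 - a2 * b2)
         (a0 * b5 + a5 * b0 + a1 * b4 + a4 * b1 + a2 * b3 + a3 * b2 - a2 * b4 - a4 * b2)"

definition coh_one :: coh where "coh_one = Coh 1 0 0 0 0 0"
definition coh_x1 :: coh where "coh_x1 = Coh 0 1 0 0 0 0"
definition coh_x2 :: coh where "coh_x2 = Coh 0 0 1 0 0 0"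

definition coh_ring_endo :: "(coh \<Rightarrow> coh) \<Rightarrow> bool" where
  "coh_ring_endo \<Psi> \<longleftrightarrow>
     (\<forall>a b. \<Psi> (coh_add a b) = coh_add (\<Psi> a) (\<Psi> b)) \<and>
     (\<forall>c a. \<Psi> (coh_scale c a) = coh_scale c (\<Psi> a)) \<and>
     (\<forall>a b. \<Psi> (coh_mult a b) = coh_mult (\<Psi> a) (\<Psi> b)) \<and>
     \<Psi> coh_one = coh_one"

definition mat2 :: "complex \<Rightarrow> complex \<Rightarrow> complex \<Rightarrow> complex \<Rightarrow> complex^2^2" where
  "mat2 a b c d = (\<chi> i j. if i = 1 then (if j = 1 then a else b)
                              else (if j = 1 then c else d))"

definition represented_by :: "(coh \<Rightarrow> coh) \<Rightarrow> complex^2^2 \<Rightarrow> bool" where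
  "represented_by \<Psi> A \<longleftrightarrow>
     \<Psi> coh_x1 = coh_add (coh_scale (A$1$1) coh_x1) (coh_scale (A$2$1) coh_x2) \<and>
     \<Psi> coh_x2 = coh_add (coh_scale (A$1$2) coh_x1) (coh_scale (A$2$2) coh_x2)"

text \<open>The Weyl group W = S_3 acting on H^2, via the matrices of (1),(12),(13),(23),(123),(321).\<close>
definition weyl_mats :: "(complex^2^2) set" where
  "weyl_mats = {mat2 1 0 0 1, mat2 0 1 1 0, mat2 (-1) 0 (-1) 1,
                mat2 1 (-1) 0 (-1), mat2 0 (-1) 1 (-1), mat2 (-1) 1 (-1) 0}"

end

theory Submission imports Defs begin

lemma mat2_mult: "mat2 a b c d ** mat2 e f g h = mat2 (a*e+b*g) (a*f+b*h) (c*e+d*g) (c*f+d*h)"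
  unfolding matrix_matrix_mult_def mat2_def
  by (simp add: vec_eq_iff forall_2 sum_2)

lemma mat2_eq: "mat2 a b c d = mat2 e f g h \<longleftrightarrow> a = e \<and> b = f \<and> c = g \<and> d = h"
  unfolding mat2_def by (auto simp: vec_eq_iff forall_2)

lemma mat2_of: "(A::complex^2^2) = mat2 (A$1$1) (A$1$2) (A$2$1) (A$2$2)"
  unfolding mat2_def by (simp add: vec_eq_iff forall_2)

lemma eqs:
  assumes "coh_ring_endo \<Psi>" "\<Psi> coh_x1 = Coh 0 a c 0 0 0" "\<Psi> coh_x2 = Coh 0 b d 0 0 0"
  shows "a^2-c^2+a*b-c*d+b^2-d^2 = 0 \<and> 2*a*c-c^2+a*d+b*c-c*d+2*b*d-d^2 = 0 \<and>
     (a^2-c^2)*d+(2*a*c-c^2)*(b-d)+(a*b-c*d)*d+(a*d+b*c-c*d)*(b-d) = 0"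
proof -
  have add: "\<And>x y. \<Psi> (coh_add x y) = coh_add (\<Psi> x) (\<Psi> y)"
   and sc: "\<And>k x. \<Psi> (coh_scale k x) = coh_scale k (\<Psi> x)"
   and mu: "\<And>x y. \<Psi> (coh_mult x y) = coh_mult (\<Psi> x) (\<Psi> y)"
    using assms(1) unfolding coh_ring_endo_def by auto
  have r1: "coh_add (coh_mult coh_x2 coh_x2) (coh_add (coh_mult coh_x1 coh_x1) (coh_mult coh_x1 coh_x2))
     = coh_scale 0 coh_x1"
    by (simp add: coh_x1_def coh_x2_def)
  have r2: "coh_add (coh_mult (coh_mult coh_x1 coh_x1) coh_x2) (coh_mult (coh_mult coh_x1 coh_x2) coh_x2)
     = coh_scale 0 coh_x1"
    by (simp add: coh_x1_def coh_x2_def)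
  have 1: "coh_add (coh_mult (\<Psi> coh_x2) (\<Psi> coh_x2)) (coh_add (coh_mult (\<Psi> coh_x1) (\<Psi> coh_x1)) (coh_mult (\<Psi> coh_x1) (\<Psi> coh_x2)))
     = coh_scale 0 (\<Psi> coh_x1)"
    using arg_cong[OF r1, of \<Psi>] by (simp add: add sc mu)
  have 2: "coh_add (coh_mult (coh_mult (\<Psi> coh_x1) (\<Psi> coh_x1)) (\<Psi> coh_x2)) (coh_mult (coh_mult (\<Psi> coh_x1) (\<Psi> coh_x2)) (\<Psi> coh_x2))
     = coh_scale 0 (\<Psi> coh_x1)"
    using arg_cong[OF r2, of \<Psi>] by (simp add: add sc mu)
  from 1 2 show ?thesis unfolding assms(2,3)
    by (simp add: power2_eq_square algebra_simps)
qed

definition om :: complex where "om = Complex (-1/2) (sqrt 3 / 2)"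

lemma om_eq: "om^2 + om + 1 = 0"
  by (simp add: om_def complex_eq_iff power2_eq_square)

lemma w_id: "mat2 1 0 0 1 \<in> weyl_mats" and w_sw: "mat2 0 1 1 0 \<in> weyl_mats"
  and w_13: "mat2 (-1) 0 (-1) 1 \<in> weyl_mats" and w_23: "mat2 1 (-1) 0 (-1) \<in> weyl_mats"
  and w_123: "mat2 0 (-1) 1 (-1) \<in> weyl_mats" and w_321: "mat2 (-1) 1 (-1) 0 \<in> weyl_mats"
  by (simp_all add: weyl_mats_def)

lemma right_id: "(A::complex^2^2) ** mat2 1 0 0 1 = A"
  by (subst (1 3) mat2_of) (simp add: mat2_mult)

lemma g2:
  assumes "w1 \<in> weyl_mats" "s^2 + s + 1 = 0" "w1 ** A = mat2 l (l * s) 0 0"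
  shows "\<exists>w1\<in>weyl_mats. \<exists>w2\<in>weyl_mats.
           (\<exists>l::complex. l \<noteq> 0 \<and> w1 ** A ** w2 = mat2 l 0 0 l) \<or>
           (\<exists>l s::complex. s^2 + s + 1 = 0 \<and> w1 ** A ** w2 = mat2 l (l * s) 0 0)"
proof -
  have "w1 ** A ** mat2 1 0 0 1 = mat2 l (l * s) 0 0" using assms(3) right_id by simp
  then show ?thesis using assms(1,2) w_id by blast
qed

lemma g1:
  assumes "w1 \<in> weyl_mats" "w1 ** A = mat2 l 0 0 l"
  shows "\<exists>w1\<in>weyl_mats. \<exists>w2\<in>weyl_mats.
           (\<exists>l::complex. l \<noteq> 0 \<and> w1 ** A ** w2 = mat2 l 0 0 l) \<or>
           (\<exists>l s::complex. s^2 + s + 1 = 0 \<and> w1 ** A ** w2 = mat2 l (l * s) 0 0)"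
proof (cases "l = 0")
  case True
  then have "w1 ** A = mat2 l (l * om) 0 0" using assms(2) by simp
  then show ?thesis using g2[OF assms(1) om_eq] by blast
next
  case False
  have "w1 ** A ** mat2 1 0 0 1 = mat2 l 0 0 l" using assms(2) right_id by simp
  then show ?thesis using assms(1) False w_id by blast
qed

theorem lemma3p7:
  fixes \<Psi> :: "coh \<Rightarrow> coh" and A :: "complex^2^2"
  assumes "coh_ring_endo \<Psi>"
    and "represented_by \<Psi> A"
  shows "\<exists>w1\<in>weyl_mats. \<exists>w2\<in>weyl_mats.
           (\<exists>l::complex. l \<noteq> 0 \<and> w1 ** A ** w2 = mat2 l 0 0 l) \<or>
           (\<exists>l s::complex. s^2 + s + 1 = 0 \<and> w1 ** A ** w2 = mat2 l (l * s) 0 0)"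
proof -
  define a where "a = A$1$1"
  define b where "b = A$1$2"
  define c where "c = A$2$1"
  define d where "d = A$2$2"
  have A: "A = mat2 a b c d" unfolding a_def b_def c_def d_def by (rule mat2_of)
  have "\<Psi> coh_x1 = Coh 0 a c 0 0 0" "\<Psi> coh_x2 = Coh 0 b d 0 0 0"
    using assms(2) unfolding represented_by_def a_def b_def c_def d_def
    by (simp_all add: coh_x1_def coh_x2_def)
  from eqs[OF assms(1) this] have
    E1: "a^2-c^2+a*b-c*d+b^2-d^2 = 0" and E2: "2*a*c-c^2+a*d+b*c-c*d+2*b*d-d^2 = 0" and
    E3: "(a^2-c^2)*d+(2*a*c-c^2)*(b-d)+(a*b-c*d)*d+(a*d+b*c-c*d)*(b-d) = 0" by auto
  define w where "w = om"
  have W: "w^2 + w + 1 = 0" unfolding w_def by (rule om_eq)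
  have P: "(w^2*a - b + c - w*d) * (w^2*a - w*b + c - w^2*d) = 0"
    using E1 E2 W by algebra
  have R: "(w*a - w^2*b + c - w*d) * (w*a - b + c - w^2*d) = 0"
    using E1 E2 W by algebra
  show ?thesis
  proof -
    consider "w^2*a - w*b + c - w^2*d = 0" "w*a - w^2*b + c - w*d = 0"
      | "w^2*a - b + c - w*d = 0" "w*a - b + c - w^2*d = 0"
      | "w^2*a - b + c - w*d = 0" "w*a - w^2*b + c - w*d = 0"
      | "w^2*a - w*b + c - w^2*d = 0" "w*a - b + c - w^2*d = 0"
      using P R by auto
    then show ?thesis
    proof cases
      case 1
      have c: "c = -b" and d: "d = a + b" using 1 W by algebra+
      have "a*b*(a+b) = 0" using E3 unfolding c d by algebra
      then consider "b = 0" | "a = 0" | "a + b = 0" by auto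
      then show ?thesis
      proof cases
        case 1 show ?thesis
          by (rule g1[OF w_id]) (simp add: A c d 1 mat2_mult mat2_eq)
      next
        case 2 show ?thesis
          by (rule g1[OF w_321, where l="-b"]) (simp add: A c d 2 mat2_mult mat2_eq)
      next
        case 3 then have "b = -a" by algebra
        then show ?thesis
          by (intro g1[OF w_123, where l="-a"]) (simp add: A c d mat2_mult mat2_eq)
      qed
    next
      case 2
      have c: "c = a + b" and d: "d = -a" using 2 W by algebra+
      have "a*b*(a+b) = 0" using E3 unfolding c d by algebra
      then consider "b = 0" | "a = 0" | "a + b = 0" by auto
      then show ?thesis
      proof cases
        case 1 show ?thesis
          by (rule g1[OF w_13, where l="-a"]) (simp add: A c d 1 mat2_mult mat2_eq)
      next
        case 2 show ?thesis
          by (rule g1[OF w_sw, where l="b"]) (simp add: A c d 2 mat2_mult mat2_eq)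
      next
        case 3 then have "b = -a" by algebra
        then show ?thesis
          by (intro g1[OF w_23, where l="a"]) (simp add: A c d mat2_mult mat2_eq)
      qed
    next
      case 3
      have a: "a = w*b" and c: "c = w*d" using 3 W by algebra+
      have "b*d*(b-d) = 0" using E3 W unfolding a c by algebra
      then consider "b = 0" | "d = 0" | "b = d" by auto
      then show ?thesis
      proof cases
        case 1 show ?thesis
          by (rule g2[OF w_sw, where s="w^2" and l="d*w"]) (use W in \<open>simp_all add: A a c 1 mat2_mult mat2_eq, algebra+\<close>)
      next
        case 2 show ?thesis
          by (rule g2[OF w_id, where s="w^2" and l="b*w"]) (use W in \<open>simp_all add: A a c 2 mat2_mult mat2_eq, algebra+\<close>)
      next
        case 3 show ?thesis
          by (rule g2[OF w_123, where s="w^2" and l="-b*w"]) (use W in \<open>simp_all add: A a c 3 mat2_mult mat2_eq, algebra+\<close>)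
      qed
    next
      case 4
      have a: "a = w^2*b" and c: "c = w^2*d" using 4 W by algebra+
      have "b*d*(b-d) = 0" using E3 W unfolding a c by algebra
      then consider "b = 0" | "d = 0" | "b = d" by auto
      then show ?thesis
      proof cases
        case 1 show ?thesis
          by (rule g2[OF w_sw, where s="w" and l="d*w^2"]) (use W in \<open>simp_all add: A a c 1 mat2_mult mat2_eq, algebra+\<close>)
      next
        case 2 show ?thesis
          by (rule g2[OF w_id, where s="w" and l="b*w^2"]) (use W in \<open>simp_all add: A a c 2 mat2_mult mat2_eq, algebra+\<close>)
      next
        case 3 show ?thesis
          by (rule g2[OF w_123, where s="w" and l="-b*w^2"]) (use W in \<open>simp_all add: A a c 3 mat2_mult mat2_eq, algebra+\<close>)
      qed
    qed
  qed
qed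

end
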